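(* Suppose $\mathcal Y=\mathbb R$, $\ell(y,\beta)=(y-\beta)^2$, and $\mathbb D_{\mathcal Y}(\cdot,\hat y)$ is convex and coercive for every $\hat y$. Let $\rho\ge\min_{i\in[N]}\kappa_{i,\gamma}$ and suppose $$\mathbb Q^\star\in\arg\max\{\operatorname{Var}_{\mathbb Q}(Y\mid X\in\mathcal N_\gamma(x_0)):\mathbb Q\in\mathbb B^\infty_\rho,\ \mathbb Q(X\in\mathcal N_\gamma(x_0))>0\}$$ exists. Then $\beta^\star=\mathbb E_{\mathbb Q^\star}[Y\mid X\in\mathcal N_\gamma(x_0)]$ is an optimal solution of $\min_{\beta\in\mathbb R}f(\beta)$, and every optimal solution of this problem equals $\beta^\star$.
   Context: Continuous metrics $\mathbb D_{\mathcal X}$ on $\mathcal X\subseteq\mathbb R^n$ and $\mathbb D_{\mathcal Y}$ on $\mathcal Y$, $\mathbb D=\mathbb D_{\mathcal X}+\mathbb D_{\mathcal Y}$; data $(\hat x_i,\hat y_i)\in\mathcal X\times\mathcal Y$, $\hat{\mathbb P}=\frac1N\sum_i\delta_{(\hat x_i,\hat y_i)}$; $\mathbb W_\infty(\mathbb Q_1,\mathbb Q_2)=\inf_{\pi\in\Pi(\mathbb Q_1,\mathbb Q_2)}\operatorname{ess\,sup}_\pi\mathbb D(\xi_1,\xi_2)$; $\mathbb B^\infty_\rho=\{\mathbb Q:\mathbb W_\infty(\mathbb Q,\hat{\mathbb P})\le\rho\}$; $\mathcal N_\gamma(x_0)=\{x\in\mathcal X:\mathbb D_{\mathcal X}(x,x_0)\le\gamma\}$,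 compact, $x_0\in\mathcal X$, $\gamma\ge0$; $f(\beta)=\sup\{\mathbb E_{\mathbb Q}[\ell(Y,\beta)\mid X\in\mathcal N_\gamma(x_0)]:\mathbb Q\in\mathbb B^\infty_\rho,\ \mathbb Q(X\in\mathcal N_\gamma(x_0))>0\}$ with $\mathbb E_{\mathbb Q}[\cdot\mid X\in A]=\mathbb E_{\mathbb Q}[\cdot\,\mathbf 1_{X\in A}]/\mathbb Q(X\in A)$, and conditional variance defined analogously; $\kappa_{i,\gamma}=\min_{x\in\mathcal N_\gamma(x_0)}\mathbb D_{\mathcal X}(x,\hat x_i)+\inf_{y\in\mathcal Y}\mathbb D_{\mathcal Y}(y,\hat y_i)$. *)

theory Defs
  imports "HOL-Probability.Probability"
begin

definition ess_sup :: "'b measure \<Rightarrow> ('b \<Rightarrow> real) \<Rightarrow> ereal" where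
  "ess_sup M f = Inf {c::ereal. AE z in M. ereal (f z) \<le> c}"

definition Dcost :: "('a \<Rightarrow> 'a \<Rightarrow> real) \<Rightarrow> (real \<Rightarrow> real \<Rightarrow> real)
    \<Rightarrow> ('a \<times> real) \<times> ('a \<times> real) \<Rightarrow> real" where
  "Dcost DX DY p = DX (fst (fst p)) (fst (snd p)) + DY (snd (fst p)) (snd (snd p))"

definition distribs :: "'a::euclidean_space set \<Rightarrow> ('a \<times> real) measure set" where
  "distribs Xs = {Q. prob_space Q \<and> sets Q = sets borel \<and> (AE z in Q. fst z \<in> Xs)}"

definition couplings :: "('a::euclidean_space \<times> real) measure \<Rightarrow> ('a \<times> real) measure
    \<Rightarrow> (('a \<times> real) \<times> ('a \<times> real)) measure set" where
  "couplings Q1 Q2 = {\<pi>. prob_space \<pi> \<and> sets \<pi> = sets borel \<and>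
      distr \<pi> borel fst = Q1 \<and> distr \<pi> borel snd = Q2}"

definition W_inf :: "('a::euclidean_space \<Rightarrow> 'a \<Rightarrow> real) \<Rightarrow> (real \<Rightarrow> real \<Rightarrow> real)
    \<Rightarrow> ('a \<times> real) measure \<Rightarrow> ('a \<times> real) measure \<Rightarrow> ereal" where
  "W_inf DX DY Q1 Q2 = (INF \<pi>\<in>couplings Q1 Q2. ess_sup \<pi> (Dcost DX DY))"

definition empirical :: "nat \<Rightarrow> (nat \<Rightarrow> 'a::euclidean_space) \<Rightarrow> (nat \<Rightarrow> real)
    \<Rightarrow> ('a \<times> real) measure" where
  "empirical N xh yh = distr (measure_pmf (pmf_of_set {..<N})) borel (\<lambda>i. (xh i, yh i))"

definition W_ball :: "'a::euclidean_space set \<Rightarrow> ('a \<Rightarrow> 'a \<Rightarrow> real) \<Rightarrow> (real \<Rightarrow> real \<Rightarrow> real)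
    \<Rightarrow> nat \<Rightarrow> (nat \<Rightarrow> 'a) \<Rightarrow> (nat \<Rightarrow> real) \<Rightarrow> real \<Rightarrow> ('a \<times> real) measure set" where
  "W_ball Xs DX DY N xh yh \<rho> =
     {Q \<in> distribs Xs. W_inf DX DY Q (empirical N xh yh) \<le> ereal \<rho>}"

definition nbhd :: "'a set \<Rightarrow> ('a \<Rightarrow> 'a \<Rightarrow> real) \<Rightarrow> real \<Rightarrow> 'a \<Rightarrow> 'a set" where
  "nbhd Xs DX \<gamma> x0 = {x \<in> Xs. DX x x0 \<le> \<gamma>}"

definition cond_exp :: "('a \<times> real) measure \<Rightarrow> ('a \<times> real \<Rightarrow> real) \<Rightarrow> 'a set \<Rightarrow> real" where
  "cond_exp Q g A = (\<integral>z. indicator A (fst z) * g z \<partial>Q) / measure Q {z. fst z \<in> A}"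

definition cond_var :: "('a \<times> real) measure \<Rightarrow> 'a set \<Rightarrow> real" where
  "cond_var Q A = cond_exp Q (\<lambda>z. (snd z - cond_exp Q snd A)^2) A"

definition admissible where
  "admissible Xs DX DY N xh yh \<rho> A =
     {Q \<in> W_ball Xs DX DY N xh yh \<rho>. measure Q {z. fst z \<in> A} > 0}"

definition f_obj where
  "f_obj Xs DX DY N xh yh \<rho> A \<beta> =
     (SUP Q\<in>admissible Xs DX DY N xh yh \<rho> A. ereal (cond_exp Q (\<lambda>z. (snd z - \<beta>)^2) A))"

definition kappa where
  "kappa DX DY A xh yh i = (INF x\<in>A. DX x (xh i)) + (INF y. DY y (yh i))"

end

theory Submission
  imports Defs
begin

definition mix :: "real \<Rightarrow> 'b measure \<Rightarrow> 'b measure \<Rightarrow> 'b measure" where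
  "mix t M1 M2 = measure_pmf (bernoulli_pmf t) \<bind> (\<lambda>b. if b then M1 else M2)"

lemma mix_kernel:
  assumes "prob_space M1" "prob_space M2" "sets M1 = sets M2"
  shows "(\<lambda>b. if b then M1 else M2) \<in> measurable (measure_pmf (bernoulli_pmf t)) (subprob_algebra M1)"
  using assms by (auto simp: space_subprob_algebra prob_space_imp_subprob_space)

lemma sets_mix[simp]:
  assumes "sets M1 = sets M2"
  shows "sets (mix t M1 M2) = sets M1"
  unfolding mix_def using assms by (subst sets_bind[where N=M1]) auto

lemma space_mix[simp]:
  assumes "sets M1 = sets M2"
  shows "space (mix t M1 M2) = space M1"
  using sets_mix[OF assms] by (metis sets_eq_imp_space_eq)

lemma emeasure_mix:
  assumes "prob_space M1" "prob_space M2" "sets M1 = sets M2" "0 \<le> t" "t \<le> 1" "A \<in> sets M1"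
  shows "emeasure (mix t M1 M2) A = emeasure M1 A * t + emeasure M2 A * (1 - t)"
  unfolding mix_def
  apply (subst emeasure_bind[OF _ mix_kernel[OF assms(1-3)]])
  using assms by (auto simp: ennreal_mult')

lemma nn_integral_mix:
  assumes "prob_space M1" "prob_space M2" "sets M1 = sets M2" "0 \<le> t" "t \<le> 1" "f \<in> borel_measurable M1"
  shows "(\<integral>\<^sup>+x. f x \<partial>mix t M1 M2) = (\<integral>\<^sup>+x. f x \<partial>M1) * t + (\<integral>\<^sup>+x. f x \<partial>M2) * (1 - t)"
  unfolding mix_def
  apply (subst nn_integral_bind[OF assms(6) mix_kernel[OF assms(1-3)]])
  using assms by (auto simp: ennreal_mult')

lemma prob_space_mix:
  assumes "prob_space M1" "prob_space M2" "sets M1 = sets M2" "0 \<le> t" "t \<le> 1"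
  shows "prob_space (mix t M1 M2)"
  unfolding mix_def
  by (rule prob_space.prob_space_bind[OF prob_space_measure_pmf _ mix_kernel[OF assms(1-3)]])
     (use assms in auto)

lemma enn2real_comb:
  assumes "a \<noteq> \<infinity>" "b \<noteq> \<infinity>" "0 \<le> t" "t \<le> 1"
  shows "enn2real (a * ennreal t + b * ennreal (1 - t)) = enn2real a * t + enn2real b * (1 - t)"
proof -
  obtain x where x: "a = ennreal x" "0 \<le> x" using assms(1) by (cases a) auto
  obtain y where y: "b = ennreal y" "0 \<le> y" using assms(2) by (cases b) auto
  show ?thesis using x y assms(3,4)
    by (simp add: ennreal_mult[symmetric] ennreal_plus[symmetric] del: ennreal_plus)
qed

lemma measure_mix:
  assumes "prob_space M1" "prob_space M2" "sets M1 = sets M2" "0 \<le> t" "t \<le> 1" "A \<in> sets M1"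
  shows "measure (mix t M1 M2) A = measure M1 A * t + measure M2 A * (1 - t)"
proof -
  interpret P1: prob_space M1 by fact
  interpret P2: prob_space M2 by fact
  show ?thesis
    unfolding measure_def emeasure_mix[OF assms]
    by (rule enn2real_comb) (use assms in auto)
qed

lemma mix_same:
  assumes "prob_space M" "0 \<le> t" "t \<le> 1"
  shows "mix t M M = M"
proof (rule measure_eqI)
  show "sets (mix t M M) = sets M" by simp
  fix A assume "A \<in> sets (mix t M M)"
  then have A: "A \<in> sets M" by simp
  have "emeasure (mix t M M) A = emeasure M A * (ennreal t + ennreal (1 - t))"
    using emeasure_mix[OF assms(1,1) refl assms(2,3) A] by (simp add: distrib_left)
  also have "ennreal t + ennreal (1 - t) = 1" using assms by (simp flip: ennreal_plus)
  finally show "emeasure (mix t M M) A = emeasure M A" by simp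
qed

lemma AE_mix:
  assumes "sets M1 = sets M2" "AE x in M1. P x" "AE x in M2. P x"
    and "prob_space M1" "prob_space M2" "0 \<le> t" "t \<le> 1"
  shows "AE x in mix t M1 M2. P x"
proof -
  obtain N1 where N1: "{x \<in> space M1. \<not> P x} \<subseteq> N1" "emeasure M1 N1 = 0" "N1 \<in> sets M1"
    using assms(2) by (auto elim: AE_E)
  obtain N2 where N2: "{x \<in> space M2. \<not> P x} \<subseteq> N2" "emeasure M2 N2 = 0" "N2 \<in> sets M2"
    using assms(3) by (auto elim: AE_E)
  have sp: "space M1 = space M2" using assms(1) by (metis sets_eq_imp_space_eq)
  have S: "N1 \<inter> N2 \<in> sets M1" using N1 N2 assms(1) by auto
  have "emeasure M1 (N1 \<inter> N2) = 0"
    using N1 by (metis S emeasure_mono inf_le1 le_zero_eq)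
  moreover have "emeasure M2 (N1 \<inter> N2) = 0"
    using N2 S assms(1) by (metis emeasure_mono inf_le2 le_zero_eq)
  ultimately have "emeasure (mix t M1 M2) (N1 \<inter> N2) = 0"
    using emeasure_mix[OF assms(4,5,1,6,7) S] by simp
  moreover have "{x \<in> space (mix t M1 M2). \<not> P x} \<subseteq> N1 \<inter> N2"
    using N1 N2 sp assms(1) by auto
  ultimately show ?thesis using S assms(1)
    by (intro AE_I[where N="N1 \<inter> N2"]) auto
qed

lemma distr_mix:
  assumes "prob_space M1" "prob_space M2" "sets M1 = sets M2" "g \<in> measurable M1 N"
  shows "distr (mix t M1 M2) N g = mix t (distr M1 N g) (distr M2 N g)"
  unfolding mix_def
  apply (subst distr_bind[OF mix_kernel[OF assms(1-3)] _ assms(4)])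
   apply simp
  apply (rule bind_cong) apply auto
  done

lemma integral_mix:
  fixes f :: "_ \<Rightarrow> real"
  assumes "prob_space M1" "prob_space M2" "sets M1 = sets M2" "0 \<le> t" "t \<le> 1"
    and i1: "integrable M1 f" and i2: "integrable M2 f"
  shows "integrable (mix t M1 M2) f"
    and "integral\<^sup>L (mix t M1 M2) f = integral\<^sup>L M1 f * t + integral\<^sup>L M2 f * (1 - t)"
proof -
  have m1: "f \<in> borel_measurable M1" using i1 by auto
  have mm: "f \<in> borel_measurable (mix t M1 M2)"
    using m1 by (subst measurable_cong_sets[OF sets_mix[OF assms(3)] refl])
  have mn: "(\<lambda>x. - f x) \<in> borel_measurable M1" using m1 by auto
  have e1: "(\<integral>\<^sup>+ x. ennreal (f x) \<partial>mix t M1 M2) =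
      (\<integral>\<^sup>+ x. ennreal (f x) \<partial>M1) * t + (\<integral>\<^sup>+ x. ennreal (f x) \<partial>M2) * (1 - t)"
    by (rule nn_integral_mix[OF assms(1-5)]) (use m1 in auto)
  have e2: "(\<integral>\<^sup>+ x. ennreal (- f x) \<partial>mix t M1 M2) =
      (\<integral>\<^sup>+ x. ennreal (- f x) \<partial>M1) * t + (\<integral>\<^sup>+ x. ennreal (- f x) \<partial>M2) * (1 - t)"
    by (rule nn_integral_mix[OF assms(1-5)]) (use m1 in auto)
  have f1: "(\<integral>\<^sup>+ x. ennreal (f x) \<partial>M1) \<noteq> \<infinity>" "(\<integral>\<^sup>+ x. ennreal (- f x) \<partial>M1) \<noteq> \<infinity>"
    using i1 unfolding real_integrable_def by auto
  have f2: "(\<integral>\<^sup>+ x. ennreal (f x) \<partial>M2) \<noteq> \<infinity>" "(\<integral>\<^sup>+ x. ennreal (- f x) \<partial>M2) \<noteq> \<infinity>"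
    using i2 unfolding real_integrable_def by auto
  show ii: "integrable (mix t M1 M2) f"
    unfolding real_integrable_def using mm e1 e2 f1 f2 by (simp add: ennreal_mult_eq_top_iff)
  show "integral\<^sup>L (mix t M1 M2) f = integral\<^sup>L M1 f * t + integral\<^sup>L M2 f * (1 - t)"
    unfolding real_lebesgue_integral_def[OF ii] real_lebesgue_integral_def[OF i1]
      real_lebesgue_integral_def[OF i2] e1 e2
    using f1 f2 assms(4,5)
    by (simp only: enn2real_comb[OF f1(1) f2(1) assms(4,5)] enn2real_comb[OF f1(2) f2(2) assms(4,5)])
      (simp add: algebra_simps)
qed


lemma ess_sup_lessD:
  assumes "ess_sup M f < c"
  shows "AE z in M. ereal (f z) \<le> c"
proof -
  from assms obtain d where "AE z in M. ereal (f z) \<le> d" "d < c"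
    unfolding ess_sup_def Inf_less_iff by auto
  then show ?thesis by (auto elim: eventually_mono)
qed

lemma ess_sup_leI:
  assumes "AE z in M. ereal (f z) \<le> c"
  shows "ess_sup M f \<le> c"
  unfolding ess_sup_def using assms by (auto intro: Inf_lower)

lemma meas_fst:
  assumes "sets M = sets (borel :: ('x::topological_space \<times> 'y::topological_space) measure)"
  shows "fst \<in> measurable M borel"
proof -
  have "(fst :: 'x \<times> 'y \<Rightarrow> 'x) \<in> borel_measurable borel"
    by (intro borel_measurable_continuous_onI continuous_on_fst continuous_on_id)
  then show ?thesis by (simp only: measurable_cong_sets[OF assms refl])
qed

lemma meas_snd:
  assumes "sets M = sets (borel :: ('x::topological_space \<times> 'y::topological_space) measure)"
  shows "snd \<in> measurable M borel"
proof -
  have "(snd :: 'x \<times> 'y \<Rightarrow> 'y) \<in> borel_measurable borel"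
    by (intro borel_measurable_continuous_onI continuous_on_snd continuous_on_id)
  then show ?thesis by (simp only: measurable_cong_sets[OF assms refl])
qed

lemma W_ball_mix:
  assumes Q1: "Q1 \<in> W_ball Xs DX DY N xh yh \<rho>" and Q2: "Q2 \<in> W_ball Xs DX DY N xh yh \<rho>"
    and t: "0 \<le> t" "t \<le> 1"
  shows "mix t Q1 Q2 \<in> W_ball Xs DX DY N xh yh \<rho>"
proof -
  let ?P = "empirical N xh yh"
  let ?D = "Dcost DX DY"
  have d1: "prob_space Q1" "sets Q1 = sets borel" "AE z in Q1. fst z \<in> Xs"
    and d2: "prob_space Q2" "sets Q2 = sets borel" "AE z in Q2. fst z \<in> Xs"
    and w1: "W_inf DX DY Q1 ?P \<le> ereal \<rho>" and w2: "W_inf DX DY Q2 ?P \<le> ereal \<rho>"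
    using Q1 Q2 by (auto simp: W_ball_def distribs_def)
  have ss: "sets Q1 = sets Q2" using d1 d2 by simp
  have "mix t Q1 Q2 \<in> distribs Xs"
    unfolding distribs_def using d1 d2 ss t
    using prob_space_mix[OF d1(1) d2(1) ss t] sets_mix[OF ss, of t]
      AE_mix[OF ss d1(3) d2(3) d1(1) d2(1) t] d1(2) by simp
  moreover have "W_inf DX DY (mix t Q1 Q2) ?P \<le> ereal \<rho>"
  proof (rule ereal_le_epsilon2)
    fix e :: real assume e: "0 < e"
    have lt: "ereal \<rho> < ereal (\<rho> + e)" using e by simp
    have "W_inf DX DY Q1 ?P < ereal (\<rho> + e)" by (rule le_less_trans[OF w1 lt])
    then obtain \<pi>1 where p1: "\<pi>1 \<in> couplings Q1 ?P" "ess_sup \<pi>1 ?D < ereal (\<rho> + e)"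
      unfolding W_inf_def INF_less_iff by blast
    have "W_inf DX DY Q2 ?P < ereal (\<rho> + e)" by (rule le_less_trans[OF w2 lt])
    then obtain \<pi>2 where p2: "\<pi>2 \<in> couplings Q2 ?P" "ess_sup \<pi>2 ?D < ereal (\<rho> + e)"
      unfolding W_inf_def INF_less_iff by blast
    have c1: "prob_space \<pi>1" "sets \<pi>1 = sets borel" "distr \<pi>1 borel fst = Q1" "distr \<pi>1 borel snd = ?P"
      using p1 by (auto simp: couplings_def)
    have c2: "prob_space \<pi>2" "sets \<pi>2 = sets borel" "distr \<pi>2 borel fst = Q2" "distr \<pi>2 borel snd = ?P"
      using p2 by (auto simp: couplings_def)
    have s12: "sets \<pi>1 = sets \<pi>2" using c1 c2 by simp
    have Pp: "prob_space ?P"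
      using prob_space.prob_space_distr[OF c1(1) meas_snd[OF c1(2)]] c1(4) by simp
    have "mix t \<pi>1 \<pi>2 \<in> couplings (mix t Q1 Q2) ?P"
      unfolding couplings_def
      using c1 c2 s12 t prob_space_mix[OF c1(1) c2(1) s12 t]
        distr_mix[OF c1(1) c2(1) s12 meas_fst[OF c1(2)], of t]
        distr_mix[OF c1(1) c2(1) s12 meas_snd[OF c1(2)], of t]
        mix_same[OF Pp t]
      by simp
    moreover have "ess_sup (mix t \<pi>1 \<pi>2) ?D \<le> ereal (\<rho> + e)"
      by (rule ess_sup_leI, rule AE_mix[OF s12 ess_sup_lessD[OF p1(2)] ess_sup_lessD[OF p2(2)] c1(1) c2(1) t])
    ultimately have "W_inf DX DY (mix t Q1 Q2) ?P \<le> ereal (\<rho> + e)"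
      unfolding W_inf_def by (rule INF_lower2)
    then show "W_inf DX DY (mix t Q1 Q2) ?P \<le> ereal \<rho> + ereal e" by simp
  qed
  ultimately show ?thesis unfolding W_ball_def by auto
qed

lemma empirical_AE:
  assumes "N \<ge> 1"
  shows "AE z in empirical N xh yh. z \<in> (\<lambda>i. (xh i, yh i)) ` {..<N}"
proof -
  have fin: "finite ((\<lambda>i. (xh i, yh i)) ` {..<N})" by simp
  have cl: "closed ((\<lambda>i. (xh i, yh i)) ` {..<N})" using fin by (rule finite_imp_closed)
  have "{x \<in> space borel. x \<in> (\<lambda>i. (xh i, yh i)) ` {..<N}} \<in> sets borel"
    using borel_closed[OF cl] by simp
  moreover have "0 \<in> {..<N}" using assms by simp
  then have ne: "{..<N} \<noteq> {}" by blast
  ultimately show ?thesis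
    unfolding empirical_def
    by (subst AE_distr_iff) (auto simp: AE_measure_pmf_iff set_pmf_of_set[OF ne])
qed

lemma coercive_bound:
  fixes g :: "real \<Rightarrow> real"
  assumes "filterlim g at_top at_infinity"
  shows "\<exists>r. \<forall>y. r \<le> \<bar>y\<bar> \<longrightarrow> c < g y"
proof -
  have "eventually (\<lambda>y. c + 1 \<le> g y) at_infinity"
    using assms by (simp add: filterlim_at_top)
  then obtain r where "\<forall>y. r \<le> norm y \<longrightarrow> c + 1 \<le> g y"
    unfolding eventually_at_infinity by blast
  then show ?thesis by (intro exI[of _ r]) force
qed

lemma W_ball_bounded:
  assumes Q: "Q \<in> W_ball Xs DX DY N xh yh \<rho>"
    and DXnn: "\<forall>a\<in>Xs. \<forall>b\<in>Xs. DX a b \<ge> 0"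
    and data: "\<forall>i<N. xh i \<in> Xs" and N: "N \<ge> 1"
    and coer: "\<forall>yh0. filterlim (\<lambda>y. DY y yh0) at_top at_infinity"
  shows "\<exists>B. AE z in Q. \<bar>snd z\<bar> \<le> B"
proof -
  let ?P = "empirical N xh yh"
  let ?D = "Dcost DX DY"
  have d: "prob_space Q" "sets Q = sets borel" "AE z in Q. fst z \<in> Xs"
    and w: "W_inf DX DY Q ?P \<le> ereal \<rho>"
    using Q by (auto simp: W_ball_def distribs_def)
  have "W_inf DX DY Q ?P < ereal (\<rho> + 1)" by (rule le_less_trans[OF w]) simp
  then obtain \<pi> where p: "\<pi> \<in> couplings Q ?P" "ess_sup \<pi> ?D < ereal (\<rho> + 1)"
    unfolding W_inf_def INF_less_iff by blast
  have c: "prob_space \<pi>" "sets \<pi> = sets borel" "distr \<pi> borel fst = Q" "distr \<pi> borel snd = ?P"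
    using p by (auto simp: couplings_def)
  have a1: "AE w in \<pi>. ereal (?D w) \<le> ereal (\<rho> + 1)" by (rule ess_sup_lessD[OF p(2)])
  have a2: "AE w in \<pi>. fst (fst w) \<in> Xs"
    by (rule AE_distrD[OF meas_fst[OF c(2)]]) (subst c(3), rule d(3))
  have a3: "AE w in \<pi>. snd w \<in> (\<lambda>i. (xh i, yh i)) ` {..<N}"
    by (rule AE_distrD[OF meas_snd[OF c(2)]]) (subst c(4), rule empirical_AE[OF N])
  have "\<forall>i. \<exists>r. \<forall>y. r \<le> \<bar>y\<bar> \<longrightarrow> \<rho> + 1 < DY y (yh i)"
    using coer coercive_bound by blast
  then obtain r where r: "\<And>i y. r i \<le> \<bar>y\<bar> \<Longrightarrow> \<rho> + 1 < DY y (yh i)" by metis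
  define B where "B = (\<Sum>i<N. \<bar>r i\<bar>)"
  have rB: "r i \<le> B" if "i < N" for i
  proof -
    have "\<bar>r i\<bar> \<le> (\<Sum>i<N. \<bar>r i\<bar>)"
      using that by (intro member_le_sum) auto
    then show ?thesis unfolding B_def by simp
  qed
  have a4: "AE w in \<pi>. \<bar>snd (fst w)\<bar> \<le> B"
    using a1 a2 a3
  proof eventually_elim
    case (elim w)
    then obtain i where i: "i < N" "snd w = (xh i, yh i)" by auto
    have "DX (fst (fst w)) (xh i) \<ge> 0" using DXnn elim(2) data i by auto
    then have "DY (snd (fst w)) (yh i) \<le> \<rho> + 1"
      using elim(1) i by (simp add: Dcost_def)
    then show ?case using r[of i "snd (fst w)"] rB[OF i(1)] by force
  qed
  have "{x \<in> space borel. \<bar>snd x\<bar> \<le> B} \<in> sets (borel :: ('a \<times> real) measure)"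
  proof -
    have "closed {x :: 'a \<times> real. \<bar>snd x\<bar> \<le> B}"
      by (intro closed_Collect_le continuous_intros)
    then show ?thesis using borel_closed by simp
  qed
  then have "AE z in distr \<pi> borel fst. \<bar>snd z\<bar> \<le> B"
    using a4 AE_distr_iff[OF meas_fst[OF c(2)], of "\<lambda>z. \<bar>snd z\<bar> \<le> B"] by simp
  then have "AE z in Q. \<bar>snd z\<bar> \<le> B" unfolding c(3) .
  then show ?thesis by blast
qed


lemma alg_lam:
  fixes l cQ cs mQ m :: real
  assumes l: "0 < l"
    and H: "l * cQ + (1 - l) * cs - (l * mQ + (1 - l) * m)^2 \<le> cs - m^2"
  shows "cQ - 2 * m * mQ + m^2 - (cs - m^2) \<le> l * (mQ - m)^2"
proof -
  have eq: "l * cQ + (1 - l) * cs - (l * mQ + (1 - l) * m)^2 - (cs - m^2)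
      = l * ((cQ - 2 * m * mQ + m^2 - (cs - m^2)) - l * (mQ - m)^2)"
    by (simp add: power2_eq_square algebra_simps)
  have "l * ((cQ - 2 * m * mQ + m^2 - (cs - m^2)) - l * (mQ - m)^2) \<le> 0"
    using H eq by linarith
  then have "(cQ - 2 * m * mQ + m^2 - (cs - m^2)) - l * (mQ - m)^2 \<le> 0"
    using l by (simp add: mult_le_0_iff)
  then show ?thesis by linarith
qed

lemma alg_small:
  fixes D K :: real
  assumes "\<And>l. 0 < l \<Longrightarrow> l < 1 \<Longrightarrow> D \<le> l * K" "K \<ge> 0"
  shows "D \<le> 0"
proof (rule ccontr)
  assume "\<not> D \<le> 0" then have D: "D > 0" by simp
  define l where "l = min (1/2) (D / (2 * (K + 1)))"
  have l0: "0 < l" using D assms(2) by (simp add: l_def)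
  have l1: "l < 1" by (simp add: l_def)
  have "l * K \<le> (D / (2 * (K + 1))) * K"
    using assms(2) by (intro mult_right_mono) (auto simp: l_def)
  also have "\<dots> < D"
  proof -
    have dk: "D * K \<ge> 0" using D assms(2) by simp
    have "D * K < D * (2 * (K + 1))"
    proof -
      have "D * (2 * (K + 1)) = 2 * (D * K) + 2 * D" by (simp add: algebra_simps)
      then show ?thesis using dk D by linarith
    qed
    moreover have "2 * (K + 1) > 0" using assms(2) by simp
    ultimately show ?thesis by (simp add: pos_divide_less_eq)
  qed
  finally show False using assms(1)[OF l0 l1] by simp
qed

lemma alg_main:
  fixes p q a b c d :: real
  assumes p: "p > 0" and q: "q > 0"
    and H: "\<And>t. 0 < t \<Longrightarrow> t < 1 \<Longrightarrow>
      ((b * t + d * (1 - t)) - 2 * ((a * t + c * (1 - t)) / (p * t + q * (1 - t))) * (a * t + c * (1 - t))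
        + ((a * t + c * (1 - t)) / (p * t + q * (1 - t)))^2 * (p * t + q * (1 - t))) / (p * t + q * (1 - t))
      \<le> (d - 2 * (c / q) * c + (c / q)^2 * q) / q"
  shows "(b - 2 * (c / q) * a + (c / q)^2 * p) / p \<le> (d - 2 * (c / q) * c + (c / q)^2 * q) / q"
proof -
  define cQ where "cQ = b / p"
  define cs where "cs = d / q"
  define mQ where "mQ = a / p"
  define m where "m = c / q"
  have V: "(d - 2 * (c / q) * c + (c / q)^2 * q) / q = cs - m^2"
    using q by (simp add: cs_def m_def power2_eq_square field_simps)
  have L: "(b - 2 * (c / q) * a + (c / q)^2 * p) / p = cQ - 2 * m * mQ + m^2"
    using p by (simp add: cQ_def m_def mQ_def power2_eq_square field_simps)
  have "cQ - 2 * m * mQ + m^2 - (cs - m^2) \<le> 0"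
  proof (rule alg_small[where K="(mQ - m)^2"])
    fix l :: real assume l: "0 < l" "l < 1"
    define t where "t = l * q / (l * q + (1 - l) * p)"
    have den: "l * q + (1 - l) * p > 0" using l p q by (simp add: add_pos_nonneg)
    have t0: "0 < t" using l q den by (simp add: t_def)
    have t1: "t < 1" using l p den by (simp add: t_def field_simps)
    define P where "P = p * t + q * (1 - t)"
    define dd where "dd = l * q + (1 - l) * p"
    have dd0: "dd > 0" using den by (simp add: dd_def)
    have tt: "t = l * q / dd" by (simp add: t_def dd_def)
    have t1': "1 - t = (1 - l) * p / dd" using dd0 by (simp add: tt dd_def field_simps)
    have "P = (p * (l * q) + q * ((1 - l) * p)) / dd"
      unfolding P_def t1' unfolding tt by (simp add: add_divide_distrib)
    also have "p * (l * q) + q * ((1 - l) * p) = p * q" by (simp add: algebra_simps)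
    finally have P: "P = p * q / (l * q + (1 - l) * p)" by (simp add: dd_def)
    have P0: "P > 0" using P p q den by simp
    have lt: "l = t * p / P" using den p q P by (simp add: t_def field_simps)
    have ml: "1 - l = (1 - t) * q / P"
    proof -
      have "1 - l = (P - t * p) / P" using P0 lt by (simp add: field_simps)
      also have "P - t * p = (1 - t) * q" by (simp add: P_def algebra_simps)
      finally show ?thesis .
    qed
    have 1: "(b * t + d * (1 - t)) / P = l * cQ + (1 - l) * cs"
    proof -
      have "l * cQ + (1 - l) * cs = (t * p / P) * (b / p) + ((1 - t) * q / P) * (d / q)"
        unfolding ml cQ_def cs_def using lt by simp
      also have "\<dots> = (t * b) / P + ((1 - t) * d) / P" using p q by simp
      finally show ?thesis using P0 by (simp add: field_simps)
    qed
    have 2: "(a * t + c * (1 - t)) / P = l * mQ + (1 - l) * m"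
    proof -
      have "l * mQ + (1 - l) * m = (t * p / P) * (a / p) + ((1 - t) * q / P) * (c / q)"
        unfolding ml mQ_def m_def using lt by simp
      also have "\<dots> = (t * a) / P + ((1 - t) * c) / P" using p q by simp
      finally show ?thesis using P0 by (simp add: field_simps)
    qed
    have "((b * t + d * (1 - t)) - 2 * ((a * t + c * (1 - t)) / P) * (a * t + c * (1 - t))
        + ((a * t + c * (1 - t)) / P)^2 * P) / P
        = (b * t + d * (1 - t)) / P - ((a * t + c * (1 - t)) / P)^2"
      using P0 by (simp add: power2_eq_square field_simps)
    then have "l * cQ + (1 - l) * cs - (l * mQ + (1 - l) * m)^2 \<le> cs - m^2"
      using H[OF t0 t1] V 1 2 unfolding P_def by simp
    then show "cQ - 2 * m * mQ + m^2 - (cs - m^2) \<le> l * (mQ - m)^2"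
      by (rule alg_lam[OF l(1)])
  qed simp
  then show ?thesis using V L by simp
qed



lemma integ_g:
  fixes Q :: "('a::euclidean_space \<times> real) measure"
  assumes Q: "prob_space Q" "sets Q = sets borel" and B: "AE z in Q. \<bar>snd z\<bar> \<le> B"
    and A: "A \<in> sets borel" and g: "continuous_on UNIV (g :: real \<Rightarrow> real)"
  shows "integrable Q (\<lambda>z. indicator A (fst z) * g (snd z))"
proof -
  interpret prob_space Q by fact
  have "bounded (g ` {-B..B})"
    by (intro compact_imp_bounded compact_continuous_image continuous_on_subset[OF g]) auto
  then obtain M where M: "\<forall>y\<in>{-B..B}. \<bar>g y\<bar> \<le> M" unfolding bounded_real by auto
  have m1: "(\<lambda>z. indicator A (fst z) :: real) \<in> borel_measurable Q"
    using measurable_compose[OF meas_fst[OF Q(2)] borel_measurable_indicator[OF A]] by (simp add: comp_def)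
  have m2: "(\<lambda>z. g (snd z)) \<in> borel_measurable Q"
    using measurable_compose[OF meas_snd[OF Q(2)] borel_measurable_continuous_onI[OF g]] by (simp add: comp_def)
  show ?thesis
  proof (rule integrable_const_bound[where B=M])
    show "AE x in Q. norm (indicator A (fst x) * g (snd x)) \<le> M"
      using B
    proof eventually_elim
      case (elim z)
      then have "snd z \<in> {-B..B}" by auto
      then have "\<bar>g (snd z)\<bar> \<le> M" using M by blast
      then show ?case by (auto simp: indicator_def)
    qed
    show "(\<lambda>z. indicator A (fst z) * g (snd z)) \<in> borel_measurable Q"
      using m1 m2 by (rule borel_measurable_times)
  qed
qed

lemma quad_formula:
  fixes Q :: "('a::euclidean_space \<times> real) measure"
  assumes Q: "prob_space Q" "sets Q = sets borel"
    and i0: "integrable Q (\<lambda>z. indicator A (fst z) * snd z ^ 0)"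
    and i1: "integrable Q (\<lambda>z. indicator A (fst z) * snd z ^ 1)"
    and i2: "integrable Q (\<lambda>z. indicator A (fst z) * snd z ^ 2)"
  shows "cond_exp Q (\<lambda>z. (snd z - \<beta>)^2) A =
     ((\<integral>z. indicator A (fst z) * snd z ^ 2 \<partial>Q) - 2 * \<beta> * (\<integral>z. indicator A (fst z) * snd z ^ 1 \<partial>Q)
      + \<beta>^2 * (\<integral>z. indicator A (fst z) * snd z ^ 0 \<partial>Q)) / measure Q {z. fst z \<in> A}"
    and "(\<integral>z. indicator A (fst z) * snd z ^ 0 \<partial>Q) = measure Q {z. fst z \<in> A}"
    and "cond_exp Q snd A = (\<integral>z. indicator A (fst z) * snd z ^ 1 \<partial>Q) / measure Q {z. fst z \<in> A}"
proof -
  have eq: "(\<lambda>z. indicator A (fst z) * (snd z - \<beta>)^2) =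
    (\<lambda>z. indicator A (fst z) * snd z ^ 2 - (2 * \<beta>) * (indicator A (fst z) * snd z ^ 1)
       + \<beta>^2 * (indicator A (fst z) * snd z ^ 0))"
    by (auto simp: fun_eq_iff power2_eq_square algebra_simps)
  show "cond_exp Q (\<lambda>z. (snd z - \<beta>)^2) A =
     ((\<integral>z. indicator A (fst z) * snd z ^ 2 \<partial>Q) - 2 * \<beta> * (\<integral>z. indicator A (fst z) * snd z ^ 1 \<partial>Q)
      + \<beta>^2 * (\<integral>z. indicator A (fst z) * snd z ^ 0 \<partial>Q)) / measure Q {z. fst z \<in> A}"
    unfolding cond_exp_def eq
    using i0 i1 i2 by (simp del: power_0 power_one_right)
  have sp: "space Q = UNIV" using Q(2) by (metis sets_eq_imp_space_eq space_borel)
  have "(\<lambda>z. indicator A (fst z) * snd z ^ 0 :: real) = indicator {z. fst z \<in> A}"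
    by (auto simp: fun_eq_iff indicator_def)
  then show "(\<integral>z. indicator A (fst z) * snd z ^ 0 \<partial>Q) = measure Q {z. fst z \<in> A}"
    using sp by simp
  show "cond_exp Q snd A = (\<integral>z. indicator A (fst z) * snd z ^ 1 \<partial>Q) / measure Q {z. fst z \<in> A}"
    unfolding cond_exp_def by simp
qed


theorem proposition5:
  fixes Xs :: "'a::euclidean_space set"
    and DX :: "'a \<Rightarrow> 'a \<Rightarrow> real" and DY :: "real \<Rightarrow> real \<Rightarrow> real"
    and N :: nat and xh :: "nat \<Rightarrow> 'a" and yh :: "nat \<Rightarrow> real"
    and x0 :: 'a and \<gamma> \<rho> :: real and Qs :: "('a \<times> real) measure"
  assumes DX_metric: "\<forall>a\<in>Xs. \<forall>b\<in>Xs. DX a b \<ge> 0 \<and> (DX a b = 0 \<longleftrightarrow> a = b) \<and> DX a b = DX b a"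
    and DX_tri: "\<forall>a\<in>Xs. \<forall>b\<in>Xs. \<forall>c\<in>Xs. DX a c \<le> DX a b + DX b c"
    and DX_cont: "continuous_on (Xs \<times> Xs) (\<lambda>(a, b). DX a b)"
    and DY_metric: "\<forall>a b. DY a b \<ge> 0 \<and> (DY a b = 0 \<longleftrightarrow> a = b) \<and> DY a b = DY b a"
    and DY_tri: "\<forall>a b c. DY a c \<le> DY a b + DY b c"
    and DY_cont: "continuous_on UNIV (\<lambda>(a, b). DY a b)"
    and DY_convex: "\<forall>yh0. convex_on UNIV (\<lambda>y. DY y yh0)"
    and DY_coercive: "\<forall>yh0. filterlim (\<lambda>y. DY y yh0) at_top at_infinity"
    and N_pos: "N \<ge> 1"
    and data: "\<forall>i<N. xh i \<in> Xs"
    and x0: "x0 \<in> Xs" and gamma: "\<gamma> \<ge> 0"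
    and nbhd_compact: "compact (nbhd Xs DX \<gamma> x0)"
    and rho: "\<rho> \<ge> Min ((\<lambda>i. kappa DX DY (nbhd Xs DX \<gamma> x0) xh yh i) ` {..<N})"
    and Qs_adm: "Qs \<in> admissible Xs DX DY N xh yh \<rho> (nbhd Xs DX \<gamma> x0)"
    and Qs_max: "\<forall>Q\<in>admissible Xs DX DY N xh yh \<rho> (nbhd Xs DX \<gamma> x0).
                   cond_var Q (nbhd Xs DX \<gamma> x0) \<le> cond_var Qs (nbhd Xs DX \<gamma> x0)"
  shows "(\<forall>\<beta>. f_obj Xs DX DY N xh yh \<rho> (nbhd Xs DX \<gamma> x0) (cond_exp Qs snd (nbhd Xs DX \<gamma> x0))
              \<le> f_obj Xs DX DY N xh yh \<rho> (nbhd Xs DX \<gamma> x0) \<beta>)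
       \<and> (\<forall>\<beta>. (\<forall>\<beta>'. f_obj Xs DX DY N xh yh \<rho> (nbhd Xs DX \<gamma> x0) \<beta>
                      \<le> f_obj Xs DX DY N xh yh \<rho> (nbhd Xs DX \<gamma> x0) \<beta>')
              \<longrightarrow> \<beta> = cond_exp Qs snd (nbhd Xs DX \<gamma> x0))"
proof -
  define A where "A = nbhd Xs DX \<gamma> x0"
  define S where "S = {z::'a \<times> real. fst z \<in> A}"
  define WB where "WB = W_ball Xs DX DY N xh yh \<rho>"
  have Aborel: "A \<in> sets borel"
    using nbhd_compact unfolding A_def by (intro borel_closed compact_imp_closed)
  have DXnn: "\<forall>a\<in>Xs. \<forall>b\<in>Xs. DX a b \<ge> 0" using DX_metric by auto
  have admD: "Q \<in> WB \<and> measure Q S > 0" if "Q \<in> admissible Xs DX DY N xh yh \<rho> A" for Q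
    using that by (simp add: admissible_def S_def WB_def)
  have admI: "Q \<in> admissible Xs DX DY N xh yh \<rho> A" if "Q \<in> WB" "measure Q S > 0" for Q
    using that by (simp add: admissible_def S_def WB_def)
  have wbp: "prob_space Q" "sets Q = sets borel" if "Q \<in> WB" for Q
    using that by (auto simp: WB_def W_ball_def distribs_def)
  have integ: "integrable Q (\<lambda>z. indicator A (fst z) * snd z ^ k)" if QW0: "Q \<in> WB" for Q k
  proof -
    obtain B where "AE z in Q. \<bar>snd z\<bar> \<le> B"
      using W_ball_bounded[OF _ DXnn data N_pos DY_coercive] QW0 unfolding WB_def by blast
    moreover have "continuous_on UNIV (\<lambda>y::real. y ^ k)" by (intro continuous_intros)
    ultimately show ?thesis
      using integ_g[OF wbp[OF QW0] _ Aborel, of B "\<lambda>y. y ^ k"] by simp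
  qed
  define I where "I Q k = (\<integral>z. indicator A (fst z) * snd z ^ k \<partial>Q)" for Q :: "('a \<times> real) measure" and k :: nat
  have quad: "cond_exp Q (\<lambda>z. (snd z - \<beta>)^2) A = (I Q 2 - 2 * \<beta> * I Q 1 + \<beta>^2 * I Q 0) / I Q 0"
    and I0: "I Q 0 = measure Q S"
    and ce: "cond_exp Q snd A = I Q 1 / I Q 0"
    if "Q \<in> WB" for Q \<beta>
    using quad_formula(1)[OF wbp[OF that] integ[OF that] integ[OF that] integ[OF that], of \<beta>]
      quad_formula(2,3)[OF wbp[OF that] integ[OF that] integ[OF that] integ[OF that]]
    unfolding I_def S_def by simp_all
  have QsW: "Qs \<in> WB" and q0: "I Qs 0 > 0"
    using admD[OF Qs_adm[folded A_def]] I0 by auto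
  define m where "m = cond_exp Qs snd A"
  define V where "V = cond_var Qs A"
  have mI: "m = I Qs 1 / I Qs 0" using ce[OF QsW] by (simp add: m_def)
  have VI: "V = (I Qs 2 - 2 * (I Qs 1 / I Qs 0) * I Qs 1 + (I Qs 1 / I Qs 0)^2 * I Qs 0) / I Qs 0"
    unfolding V_def cond_var_def using quad[OF QsW] ce[OF QsW] by simp
  have key: "cond_exp Q (\<lambda>z. (snd z - m)^2) A \<le> V"
    if Q: "Q \<in> admissible Xs DX DY N xh yh \<rho> A" for Q
  proof -
    have QW: "Q \<in> WB" and p0: "I Q 0 > 0" using admD[OF Q] I0 by auto
    have "(I Q 2 - 2 * (I Qs 1 / I Qs 0) * I Q 1 + (I Qs 1 / I Qs 0)^2 * I Q 0) / I Q 0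
        \<le> (I Qs 2 - 2 * (I Qs 1 / I Qs 0) * I Qs 1 + (I Qs 1 / I Qs 0)^2 * I Qs 0) / I Qs 0"
    proof (rule alg_main[OF p0 q0])
      fix t :: real assume t: "0 < t" "t < 1"
      define Qt where "Qt = mix t Q Qs"
      have ss: "sets Q = sets Qs" using wbp[OF QW] wbp[OF QsW] by simp
      have QtW: "Qt \<in> WB"
        unfolding Qt_def WB_def using W_ball_mix[of Q _ _ _ _ _ _ _ Qs t] QW QsW t unfolding WB_def by simp
      have Imix: "I Qt k = I Q k * t + I Qs k * (1 - t)" for k
        unfolding Qt_def I_def
        by (rule integral_mix(2)[OF wbp(1)[OF QW] wbp(1)[OF QsW] ss]) (use t integ[OF QW] integ[OF QsW] in auto)
      have pos: "I Q 0 * t + I Qs 0 * (1 - t) > 0"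
        using p0 q0 t by (intro add_pos_pos mult_pos_pos) auto
      have "Qt \<in> admissible Xs DX DY N xh yh \<rho> A"
        using admI[OF QtW] I0[OF QtW] Imix[of 0] pos by simp
      then have "cond_var Qt A \<le> V"
        using Qs_max unfolding V_def A_def by blast
      then show "((I Q 2 * t + I Qs 2 * (1 - t)) - 2 * ((I Q 1 * t + I Qs 1 * (1 - t)) / (I Q 0 * t + I Qs 0 * (1 - t))) * (I Q 1 * t + I Qs 1 * (1 - t))
        + ((I Q 1 * t + I Qs 1 * (1 - t)) / (I Q 0 * t + I Qs 0 * (1 - t)))^2 * (I Q 0 * t + I Qs 0 * (1 - t))) / (I Q 0 * t + I Qs 0 * (1 - t))
      \<le> (I Qs 2 - 2 * (I Qs 1 / I Qs 0) * I Qs 1 + (I Qs 1 / I Qs 0)^2 * I Qs 0) / I Qs 0"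
        unfolding cond_var_def quad[OF QtW] ce[OF QtW] Imix VI .
    qed
    then show ?thesis using quad[OF QW, of m] mI VI by simp
  qed
  let ?f = "f_obj Xs DX DY N xh yh \<rho> A"
  have f_le: "?f m \<le> ereal V"
    unfolding f_obj_def by (rule SUP_least) (use key in simp)
  have f_ge: "ereal (V + (m - \<beta>)^2) \<le> ?f \<beta>" for \<beta>
  proof -
    have "cond_exp Qs (\<lambda>z. (snd z - \<beta>)^2) A = V + (m - \<beta>)^2"
      unfolding quad[OF QsW] VI mI using q0 by (simp add: field_simps power2_eq_square)
    then show ?thesis
      unfolding f_obj_def by (intro SUP_upper2[OF Qs_adm[folded A_def]]) simp
  qed
  have part1: "?f m \<le> ?f \<beta>" for \<beta>
  proof -
    have "ereal V \<le> ereal (V + (m - \<beta>)^2)" by simp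
    then show ?thesis using f_le f_ge[of \<beta>] by (meson order.trans)
  qed
  have part2: "\<beta> = m" if "\<forall>\<beta>'. ?f \<beta> \<le> ?f \<beta>'" for \<beta>
  proof -
    have "ereal (V + (m - \<beta>)^2) \<le> ereal V"
      using f_ge[of \<beta>] that f_le by (meson order.trans)
    then have "(m - \<beta>)^2 \<le> 0" by simp
    then show ?thesis by simp
  qed
  show ?thesis using part1 part2 unfolding A_def m_def by blast
qed

end
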